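(* Let $\{\Delta_1,\dots,\Delta_r\}$ be a nef-partition of a reflexive polytope $\Delta$ with dual nef-partition $\{\nabla_1,\dots,\nabla_r\}$. Let $v$ be any lattice point of $\partial\Delta^*$ and $\Gamma(v)$ the minimal face of $\Delta^*$ containing $v$. Then $\Gamma(v)$ is a face of $\nabla_i$ for some $i\in\{1,\dots,r\}$.
   Context: Let $M\cong\mathbb Z^d$, $N=\mathrm{Hom}(M,\mathbb Z)$, $\langle\cdot,\cdot\rangle$ the pairing. A $d$-dimensional lattice polytope $\Delta\subset M_{\mathbb R}$ is reflexive if $\Delta=\{x:\langle x,e_k\rangle\ge-1,\ k=1,\dots,n\}$ with $e_k\in N$ the primitive inward facet normals; $\Delta^*=\mathrm{Conv}(e_1,\dots,e_n)$. A nef-partition of $\Delta$ is a Minkowski decomposition $\Delta=\Delta_1+\dots+\Delta_r$ into lattice polytopes with $\varphi_j(e_k)\in\{0,1\}$ for all $j,k$, where $\varphi_j(y)=-\min_{x\in\Delta_j}\langle x,y\rangle$. The dual nef-partition consists of $\nabla_j=\mathrm{Conv}(\{0\}\cup\{e_k:\varphi_j(e_k)=1\})\subset N_{\mathbb R}$; it is known that $\Delta^*=\mathrm{Conv}(\nabla_1\cup\dots\cup\nabla_r)$. *)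

theory Defs
  imports "HOL-Analysis.Analysis"
begin

text \<open>Both M_R and N_R are modelled as real^'n (with M = N = Z^d the integer points);
  the pairing <x,y> is the standard inner product x \<bullet> y.\<close>

definition lattice_point :: "real^'n \<Rightarrow> bool" where
  "lattice_point x \<longleftrightarrow> (\<forall>i. x $ i \<in> \<int>)"

definition lattice_polytope :: "(real^'n) set \<Rightarrow> bool" where
  "lattice_polytope P \<longleftrightarrow> (\<exists>S. finite S \<and> (\<forall>x\<in>S. lattice_point x) \<and> P = convex hull S)"

definition primitive :: "real^'n \<Rightarrow> bool" where
  "primitive e \<longleftrightarrow> lattice_point e \<and> e \<noteq> 0 \<and>
     \<not> (\<exists>w (m::nat). lattice_point w \<and> m \<ge> 2 \<and> e = of_nat m *\<^sub>R w)"

definition reflexive :: "(real^'n) set \<Rightarrow> bool" where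
  "reflexive \<Delta> \<longleftrightarrow> lattice_polytope \<Delta> \<and> aff_dim \<Delta> = int CARD('n) \<and>
     (\<forall>F. F facet_of \<Delta> \<longrightarrow>
        (\<exists>e. primitive e \<and> (\<forall>x\<in>\<Delta>. x \<bullet> e \<ge> -1) \<and> F = \<Delta> \<inter> {x. x \<bullet> e = -1}))"

definition facet_normals :: "(real^'n) set \<Rightarrow> (real^'n) set" where
  "facet_normals \<Delta> = {e. primitive e \<and> (\<forall>x\<in>\<Delta>. x \<bullet> e \<ge> -1) \<and>
                             (\<Delta> \<inter> {x. x \<bullet> e = -1}) facet_of \<Delta>}"

definition dual_polytope :: "(real^'n) set \<Rightarrow> (real^'n) set" where
  "dual_polytope \<Delta> = convex hull (facet_normals \<Delta>)"

definition supp_phi :: "(real^'n) set \<Rightarrow> real^'n \<Rightarrow> real" where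
  "supp_phi D y = - Inf ((\<lambda>x. x \<bullet> y) ` D)"

definition minkowski_sum :: "nat \<Rightarrow> (nat \<Rightarrow> (real^'n) set) \<Rightarrow> (real^'n) set" where
  "minkowski_sum r D = {x. \<exists>f. (\<forall>j\<in>{1..r}. f j \<in> D j) \<and> x = (\<Sum>j=1..r. f j)}"

definition nef_partition :: "(real^'n) set \<Rightarrow> nat \<Rightarrow> (nat \<Rightarrow> (real^'n) set) \<Rightarrow> bool" where
  "nef_partition \<Delta> r D \<longleftrightarrow> reflexive \<Delta> \<and> r \<ge> 1 \<and>
     (\<forall>j\<in>{1..r}. lattice_polytope (D j)) \<and>
     \<Delta> = minkowski_sum r D \<and>
     (\<forall>j\<in>{1..r}. \<forall>e\<in>facet_normals \<Delta>. supp_phi (D j) e \<in> {0, 1})"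

definition dual_nef :: "(real^'n) set \<Rightarrow> (nat \<Rightarrow> (real^'n) set) \<Rightarrow> nat \<Rightarrow> (real^'n) set" where
  "dual_nef \<Delta> D j = convex hull (insert 0 {e\<in>facet_normals \<Delta>. supp_phi (D j) e = 1})"

end

theory Submission
  imports Defs
begin
lemma lin_min:
  fixes S :: "(real^'n) set"
  assumes "finite S" "S \<noteq> {}"
  shows "\<exists>g\<in>S. \<forall>y\<in>convex hull S. g \<bullet> w \<le> y \<bullet> w"
proof -
  define c where "c = Min ((\<lambda>y. y \<bullet> w) ` S)"
  have "c \<in> (\<lambda>y. y \<bullet> w) ` S" unfolding c_def using assms by (intro Min_in) auto
  then obtain g where g: "g \<in> S" "g \<bullet> w = c" by (rule imageE) simp
  have le: "\<forall>y\<in>S. g \<bullet> w \<le> y \<bullet> w"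
  proof
    fix y assume "y \<in> S"
    then have "c \<le> y \<bullet> w" unfolding c_def using assms(1) by (intro Min_le) auto
    then show "g \<bullet> w \<le> y \<bullet> w" using g(2) by simp
  qed
  have "convex hull S \<subseteq> {y. g \<bullet> w \<le> w \<bullet> y}"
    by (rule hull_minimal) (use le convex_halfspace_ge[of "g \<bullet> w" w] in \<open>auto simp: inner_commute\<close>)
  then have "\<forall>y\<in>convex hull S. g \<bullet> w \<le> y \<bullet> w" by (auto simp: inner_commute)
  with g(1) show ?thesis by (rule bexI[rotated])
qed

lemma phi_eq:
  fixes S :: "(real^'n) set"
  assumes "finite S" "S \<noteq> {}" "D = convex hull S"
  shows "\<exists>g\<in>S. supp_phi D w = -(g \<bullet> w) \<and> (\<forall>y\<in>D. g \<bullet> w \<le> y \<bullet> w)"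
proof -
  obtain g where g: "g \<in> S" "\<forall>y\<in>convex hull S. g \<bullet> w \<le> y \<bullet> w" using lin_min[OF assms(1,2)] by blast
  have gD: "g \<in> convex hull S" using g(1) by (rule hull_inc)
  have "Inf ((\<lambda>x. x \<bullet> w) ` (convex hull S)) = g \<bullet> w"
    by (rule cInf_eq_minimum) (use gD g(2) in auto)
  then have "supp_phi D w = -(g \<bullet> w)" using assms(3) by (simp add: supp_phi_def)
  moreover have "\<forall>y\<in>D. g \<bullet> w \<le> y \<bullet> w" using g(2) assms(3) by simp
  ultimately show ?thesis using g(1) by blast
qed

lemma pos_weights:
  fixes T :: "(real^'n) set"
  assumes "v \<in> convex hull T"
  shows "\<exists>s u. finite s \<and> s \<subseteq> T \<and> (\<forall>e\<in>s. 0 < u e) \<and> sum u s = 1 \<and> (\<Sum>e\<in>s. u e *\<^sub>R e) = v"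
proof -
  obtain s u where s: "finite s" "s \<subseteq> T" "\<forall>x\<in>s. 0 \<le> u x" "sum u s = 1" "(\<Sum>e\<in>s. u e *\<^sub>R e) = v"
    using assms unfolding convex_hull_explicit by blast
  define s' where "s' = {e\<in>s. u e \<noteq> 0}"
  have fs': "finite s'" using s(1) by (simp add: s'_def)
  have "sum u s' = sum u s" unfolding s'_def by (rule sum.mono_neutral_left) (use s in auto)
  moreover have "(\<Sum>e\<in>s'. u e *\<^sub>R e) = (\<Sum>e\<in>s. u e *\<^sub>R e)" unfolding s'_def
    by (rule sum.mono_neutral_left) (use s in auto)
  moreover have "\<forall>e\<in>s'. 0 < u e"
  proof
    fix e assume "e \<in> s'"
    then have "e \<in> s" "u e \<noteq> 0" by (auto simp: s'_def)
    then show "0 < u e" using s(3) by force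
  qed
  moreover have "s' \<subseteq> T" using s(2) by (auto simp: s'_def)
  ultimately have "finite s' \<and> s' \<subseteq> T \<and> (\<forall>e\<in>s'. 0 < u e) \<and> sum u s' = 1 \<and> (\<Sum>e\<in>s'. u e *\<^sub>R e) = v"
    using s(4,5) fs' by simp
  then show ?thesis by (intro exI[of _ s'] exI[of _ u])
qed

lemma in_hull_weights:
  fixes T :: "(real^'n) set"
  assumes "finite s" "s \<subseteq> T" "\<forall>e\<in>s. 0 < u e" "sum u s = 1"
  shows "(\<Sum>e\<in>s. u e *\<^sub>R e) \<in> convex hull T"
proof -
  have "\<forall>e\<in>s. 0 \<le> u e" using assms(3) by (simp add: less_imp_le)
  then have "finite s \<and> s \<subseteq> T \<and> (\<forall>x\<in>s. 0 \<le> u x) \<and> sum u s = 1 \<and> (\<Sum>e\<in>s. u e *\<^sub>R e) = (\<Sum>e\<in>s. u e *\<^sub>R e)"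
    using assms(1,2,4) by simp
  then have "\<exists>S u'. finite S \<and> S \<subseteq> T \<and> (\<forall>x\<in>S. 0 \<le> u' x) \<and> sum u' S = 1 \<and> (\<Sum>e\<in>S. u' e *\<^sub>R e) = (\<Sum>e\<in>s. u e *\<^sub>R e)"
    by (intro exI[of _ s] exI[of _ u])
  then show ?thesis unfolding convex_hull_explicit by (rule CollectI)
qed

lemma weights_tight:
  fixes m :: "real^'n"
  assumes "finite s" "\<forall>e\<in>s. 0 < u e" "sum u s = 1" "\<forall>e\<in>s. c \<le> m \<bullet> e"
    "m \<bullet> (\<Sum>e\<in>s. u e *\<^sub>R e) = c" "e \<in> s"
  shows "m \<bullet> e = c"
proof -
  have "(\<Sum>e\<in>s. u e * (m \<bullet> e - c)) = (\<Sum>e\<in>s. u e * (m \<bullet> e)) - c * sum u s"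
    by (simp add: algebra_simps sum_subtractf sum_distrib_left)
  also have "\<dots> = 0" using assms(3,5) by (simp add: inner_sum_right)
  finally have z: "(\<Sum>e\<in>s. u e * (m \<bullet> e - c)) = 0" .
  have nn: "\<And>x. x \<in> s \<Longrightarrow> 0 \<le> u x * (m \<bullet> x - c)"
  proof -
    fix x assume x: "x \<in> s"
    have "0 < u x" using assms(2) x by blast
    moreover have "c \<le> m \<bullet> x" using assms(4) x by blast
    ultimately show "0 \<le> u x * (m \<bullet> x - c)" by simp
  qed
  have "\<forall>x\<in>s. u x * (m \<bullet> x - c) = 0"
    using iffD1[OF sum_nonneg_eq_0_iff[OF assms(1) nn] z] .
  then have "u e * (m \<bullet> e - c) = 0" using assms(6) by blast
  moreover have "u e > 0" using assms(2,6) by blast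
  ultimately show ?thesis by simp
qed

lemma lattice_inner_int: "lattice_point (x::real^'n) \<Longrightarrow> lattice_point y \<Longrightarrow> x \<bullet> y \<in> \<int>"
  unfolding lattice_point_def inner_vec_def by (intro Ints_sum Ints_mult) auto

theorem mainTheorem10:
  fixes \<Delta> :: "(real^'n) set" and D :: "nat \<Rightarrow> (real^'n) set" and r :: nat
    and v :: "real^'n" and \<Gamma> :: "(real^'n) set"
  assumes "nef_partition \<Delta> r D"
    and "lattice_point v"
    and "v \<in> frontier (dual_polytope \<Delta>)"
    and "\<Gamma> face_of dual_polytope \<Delta>" and "v \<in> \<Gamma>"
    and "\<forall>G. G face_of dual_polytope \<Delta> \<and> v \<in> G \<longrightarrow> \<Gamma> \<subseteq> G"
  shows "\<exists>i\<in>{1..r}. \<Gamma> face_of dual_nef \<Delta> D i"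
proof -
  define N where "N = facet_normals \<Delta>"
  define Ds where "Ds = dual_polytope \<Delta>"
  have Ds: "Ds = convex hull N" by (simp add: Ds_def N_def dual_polytope_def)
  have a4: "\<Gamma> face_of Ds" using assms(4) by (simp add: Ds_def)
  have a6: "\<And>G. G face_of Ds \<Longrightarrow> v \<in> G \<Longrightarrow> \<Gamma> \<subseteq> G" using assms(6) by (simp add: Ds_def)
  have refl: "reflexive \<Delta>" and lp: "\<forall>j\<in>{1..r}. lattice_polytope (D j)"
    and eq: "\<Delta> = minkowski_sum r D"
    and nef: "\<forall>j\<in>{1..r}. \<forall>e\<in>N. supp_phi (D j) e \<in> {0, 1}"
    using assms(1) by (auto simp: nef_partition_def N_def)
  have lpD: "lattice_polytope \<Delta>" and affD: "aff_dim \<Delta> = int CARD('n)"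
    and fac: "\<And>F. F facet_of \<Delta> \<Longrightarrow>
        (\<exists>e. primitive e \<and> (\<forall>x\<in>\<Delta>. x \<bullet> e \<ge> -1) \<and> F = \<Delta> \<inter> {x. x \<bullet> e = -1})"
    using refl by (auto simp: reflexive_def)
  obtain S0 where S0: "finite S0" "\<Delta> = convex hull S0" using lpD by (auto simp: lattice_polytope_def)
  have "polytope \<Delta>" unfolding polytope_def using S0 by blast
  then have polyD: "polyhedron \<Delta>" by (rule polytope_imp_polyhedron)
  have cvxD: "convex \<Delta>" using S0 by simp
  have cpD: "compact \<Delta>" using S0 by (simp add: compact_convex_hull finite_imp_compact)
  have clD: "closed \<Delta>" using cpD compact_imp_closed by blast
  have neD: "\<Delta> \<noteq> {}" using affD by auto
  have F2: "\<And>x e. x \<in> \<Delta> \<Longrightarrow> e \<in> N \<Longrightarrow> x \<bullet> e \<ge> -1" by (auto simp: N_def facet_normals_def)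
  have R: "x \<in> \<Delta>" if x: "\<forall>e\<in>N. x \<bullet> e \<ge> -1" for x
  proof (rule ccontr)
    assume xn: "x \<notin> \<Delta>"
    have intD: "interior \<Delta> = rel_interior \<Delta>" using interior_rel_interior_gen[of \<Delta>] affD by simp
    have "rel_interior \<Delta> \<noteq> {}" using rel_interior_eq_empty cvxD neD by blast
    then obtain p where p: "p \<in> interior \<Delta>" using intD by auto
    have pD: "p \<in> \<Delta>" using p interior_subset by blast
    have "closed_segment p x \<inter> frontier \<Delta> \<noteq> {}"
      by (rule connected_Int_frontier) (use pD xn in auto)
    then obtain z where z: "z \<in> closed_segment p x" "z \<in> frontier \<Delta>" by auto
    have zD: "z \<in> \<Delta>" using z clD frontier_subset_closed by blast
    have "z \<in> rel_frontier \<Delta>" using z(2) intD by (simp add: frontier_def rel_frontier_def)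
    then obtain F where F: "F facet_of \<Delta>" "z \<in> F" using rel_frontier_of_polyhedron[OF polyD] by auto
    obtain e where e: "primitive e" "\<forall>x\<in>\<Delta>. x \<bullet> e \<ge> -1" "F = \<Delta> \<inter> {x. x \<bullet> e = -1}"
      using fac[OF F(1)] by blast
    have eN: "e \<in> N" using e F by (auto simp: N_def facet_normals_def)
    have ze: "z \<bullet> e = -1" using e F by auto
    have e0: "e \<noteq> 0" using e by (simp add: primitive_def)
    obtain \<epsilon> where eps: "\<epsilon> > 0" "ball p \<epsilon> \<subseteq> \<Delta>" using p mem_interior by blast
    define q where "q = p - (\<epsilon>/2/norm e) *\<^sub>R e"
    have "dist p q = \<epsilon>/2" using e0 eps by (simp add: q_def dist_norm)
    then have "q \<in> \<Delta>" using eps by auto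
    then have "q \<bullet> e \<ge> -1" using e by auto
    moreover have "q \<bullet> e = p \<bullet> e - \<epsilon>/2 * norm e"
      using e0 by (simp add: q_def inner_diff_left power2_eq_square flip: power2_norm_eq_inner)
    moreover have "\<epsilon>/2 * norm e > 0" using e0 eps by simp
    ultimately have pe: "p \<bullet> e > -1" by linarith
    obtain t where t: "z = (1 - t) *\<^sub>R p + t *\<^sub>R x" "0 \<le> t" "t \<le> 1" using z(1) in_segment(1) by blast
    show False
    proof (cases "t = 1")
      case True then show False using t zD xn by simp
    next
      case False
      then have "1 - t > 0" using t by simp
      then have "(1 - t) * (p \<bullet> e) > (1 - t) * (-1)" using pe by (intro mult_strict_left_mono) auto
      then have "(1 - t) * (p \<bullet> e) > t - 1" by simp
      moreover have "t * (x \<bullet> e) \<ge> t * (-1)" using x eN t by (intro mult_left_mono) auto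
      then have "t * (x \<bullet> e) \<ge> - t" by simp
      moreover have "z \<bullet> e = (1 - t) * (p \<bullet> e) + t * (x \<bullet> e)" using t by (simp add: inner_add_left)
      ultimately show False using ze by linarith
    qed
  qed
  have U: "a = 0" if a: "\<forall>e\<in>N. a \<bullet> e \<ge> 0" for a
  proof (rule ccontr)
    assume a0: "a \<noteq> 0"
    obtain x where xD: "x \<in> \<Delta>" using neD by auto
    have "bounded \<Delta>" using cpD by (rule compact_imp_bounded)
    then obtain B where B: "B > 0" "\<forall>y\<in>\<Delta>. norm y \<le> B" unfolding bounded_pos by blast
    define t where "t = (B + norm x + 1) / norm a"
    have t0: "t \<ge> 0" using a0 B by (simp add: t_def)
    have "x + t *\<^sub>R a \<in> \<Delta>"
    proof (rule R, intro ballI)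
      fix e assume eN: "e \<in> N"
      have "t * (a \<bullet> e) \<ge> 0" using t0 a eN by simp
      then show "(x + t *\<^sub>R a) \<bullet> e \<ge> -1" using F2[OF xD eN] by (simp add: inner_add_left)
    qed
    then have "norm (x + t *\<^sub>R a) \<le> B" using B by auto
    moreover have "norm (t *\<^sub>R a) \<le> norm (x + t *\<^sub>R a) + norm x"
      using norm_triangle_sub[of "t *\<^sub>R a" "x + t *\<^sub>R a"] by simp
    moreover have "norm (t *\<^sub>R a) = B + norm x + 1" using a0 B by (simp add: t_def add_nonneg_pos)
    ultimately show False by linarith
  qed
  have NDs: "N \<subseteq> Ds" unfolding Ds by (rule hull_subset)
  have cvxDs: "convex Ds" unfolding Ds by (rule convex_convex_hull)
  have zeroDs: "0 \<in> Ds"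
  proof (rule ccontr)
    assume "0 \<notin> Ds"
    then obtain a where "a \<noteq> 0" "\<forall>x\<in>Ds. 0 \<le> a \<bullet> x" using separating_hyperplane_set_0 cvxDs by blast
    then show False using U NDs by (meson subsetD)
  qed
  have HullGe: "x \<bullet> y \<ge> -1" if "x \<in> \<Delta>" "y \<in> Ds" for x y
  proof -
    have "Ds \<subseteq> {y. x \<bullet> y \<ge> -1}"
      unfolding Ds by (rule hull_minimal) (use F2 that in \<open>auto simp: convex_halfspace_ge\<close>)
    then show ?thesis using that by auto
  qed
  have vDs: "v \<in> Ds" using a4 assms(5) face_of_imp_subset by blast
  obtain a where a: "a \<noteq> 0" "\<forall>y\<in>Ds. a \<bullet> v \<le> a \<bullet> y"
  proof (cases "v \<in> rel_interior Ds")
    case True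
    have "v \<notin> interior Ds" using assms(3) by (simp add: Ds_def frontier_def)
    then have ie: "interior Ds = {}" using True interior_rel_interior_gen[of Ds] by (auto split: if_splits)
    obtain a b where a0: "a \<noteq> 0" and sub: "Ds \<subseteq> {x. a \<bullet> x = b}"
      using empty_interior_subset_hyperplane[OF cvxDs ie] by blast
    have "\<forall>y\<in>Ds. a \<bullet> v \<le> a \<bullet> y"
    proof
      fix y assume y: "y \<in> Ds"
      have "a \<bullet> y = b" using subsetD[OF sub y] by simp
      moreover have "a \<bullet> v = b" using subsetD[OF sub vDs] by simp
      ultimately show "a \<bullet> v \<le> a \<bullet> y" by simp
    qed
    then show ?thesis by (rule that[OF a0])
  next
    case False
    have vc: "v \<in> closure Ds" using vDs closure_subset by blast
    obtain a where a0: "a \<noteq> 0" and h: "\<And>y. y \<in> closure Ds \<Longrightarrow> a \<bullet> v \<le> a \<bullet> y"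
      and "\<And>y. y \<in> rel_interior Ds \<Longrightarrow> a \<bullet> v < a \<bullet> y"
      by (rule supporting_hyperplane_relative_frontier[OF cvxDs vc False]) iprover
    have "\<forall>y\<in>Ds. a \<bullet> v \<le> a \<bullet> y"
    proof
      fix y assume "y \<in> Ds"
      then have "y \<in> closure Ds" by (rule subsetD[OF closure_subset])
      then show "a \<bullet> v \<le> a \<bullet> y" by (rule h)
    qed
    then show ?thesis by (rule that[OF a0])
  qed
  have av: "a \<bullet> v < 0"
  proof (rule ccontr)
    assume "\<not> a \<bullet> v < 0"
    have "\<forall>e\<in>N. a \<bullet> e \<ge> 0"
    proof
      fix e assume eN: "e \<in> N"
      have "e \<in> Ds" using NDs eN by (rule subsetD)
      then have "a \<bullet> v \<le> a \<bullet> e" using a(2) by blast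
      then show "a \<bullet> e \<ge> 0" using \<open>\<not> a \<bullet> v < 0\<close> by simp
    qed
    then have "a = 0" by (rule U)
    then show False using a(1) by simp
  qed
  define m where "m = (-1 / (a \<bullet> v)) *\<^sub>R a"
  have mv: "m \<bullet> v = -1" using av by (simp add: m_def)
  have mD: "m \<in> \<Delta>"
  proof (rule R, intro ballI)
    fix e assume eN: "e \<in> N"
    have c: "-1 / (a \<bullet> v) > 0" using av by (simp add: divide_neg_pos)
    have "e \<in> Ds" using NDs eN by (rule subsetD)
    then have "a \<bullet> e \<ge> a \<bullet> v" using a(2) by blast
    then have "(-1 / (a \<bullet> v)) * (a \<bullet> e) \<ge> (-1 / (a \<bullet> v)) * (a \<bullet> v)"
      using c by (intro mult_left_mono) auto
    then show "m \<bullet> e \<ge> -1" using av by (simp add: m_def)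
  qed
  obtain s u where su: "finite s" "s \<subseteq> N" "\<forall>e\<in>s. 0 < u e" "sum u s = 1" "(\<Sum>e\<in>s. u e *\<^sub>R e) = v"
  proof -
    have "v \<in> convex hull N" using vDs Ds by simp
    from pos_weights[OF this] show ?thesis using that by blast
  qed
  have me: "m \<bullet> e = -1" if "e \<in> s" for e
    by (rule weights_tight[of s u "-1" m]) (use su that F2[OF mD] mv in auto)
  have "\<forall>j\<in>{1..r}. \<exists>S. finite S \<and> (\<forall>x\<in>S. lattice_point x) \<and> D j = convex hull S"
    using lp by (auto simp: lattice_polytope_def)
  from bchoice[OF this] obtain S where S0: "\<forall>j\<in>{1..r}. finite (S j) \<and> (\<forall>x\<in>S j. lattice_point x) \<and> D j = convex hull (S j)"
    by blast
  have S: "\<And>j. j \<in> {1..r} \<Longrightarrow> finite (S j) \<and> (\<forall>x\<in>S j. lattice_point x) \<and> D j = convex hull (S j)"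
    using S0 by blast
  obtain f where f: "\<forall>j\<in>{1..r}. f j \<in> D j" "m = (\<Sum>j=1..r. f j)"
    using mD eq by (auto simp: minkowski_sum_def)
  have Sne: "S j \<noteq> {}" if "j \<in> {1..r}" for j
  proof -
    have "f j \<in> D j" using f(1) that by blast
    then show ?thesis using S[OF that] by auto
  qed
  have P: "\<exists>g\<in>S j. supp_phi (D j) w = -(g \<bullet> w) \<and> (\<forall>y\<in>D j. g \<bullet> w \<le> y \<bullet> w)" if "j \<in> {1..r}" for j w
    by (rule phi_eq) (use S[OF that] Sne[OF that] in auto)
  have Iphi: "y \<bullet> w \<ge> - supp_phi (D j) w" if "j \<in> {1..r}" "y \<in> D j" for j y w
    using P[OF that(1), of w] that(2) by auto
  have SumD: "(\<Sum>j=1..r. g j) \<in> \<Delta>" if "\<forall>j\<in>{1..r}. g j \<in> D j" for g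
  proof -
    have "(\<Sum>j=1..r. g j) \<in> minkowski_sum r D" unfolding minkowski_sum_def using that by blast
    then show ?thesis using eq by simp
  qed
  have phisum: "(\<Sum>j=1..r. supp_phi (D j) e) \<le> 1" if "e \<in> N" for e
  proof -
    have "\<forall>j\<in>{1..r}. \<exists>g. g \<in> D j \<and> supp_phi (D j) e = -(g \<bullet> e)"
    proof
      fix j assume j: "j \<in> {1..r}"
      obtain g where g: "g \<in> S j" "supp_phi (D j) e = -(g \<bullet> e)" using P[OF j, of e] by blast
      have "g \<in> D j" using S[OF j] g(1) by (simp add: hull_inc)
      then show "\<exists>g. g \<in> D j \<and> supp_phi (D j) e = -(g \<bullet> e)" using g(2) by blast
    qed
    from bchoice[OF this] obtain g where g: "\<forall>j\<in>{1..r}. g j \<in> D j \<and> supp_phi (D j) e = -(g j \<bullet> e)"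
      by blast
    have "(\<Sum>j=1..r. g j) \<bullet> e \<ge> -1" using F2[OF SumD that] g by auto
    then have "(\<Sum>j=1..r. g j \<bullet> e) \<ge> -1" by (simp add: inner_sum_left)
    moreover have "(\<Sum>j=1..r. supp_phi (D j) e) = - (\<Sum>j=1..r. g j \<bullet> e)"
      using g by (simp add: sum_negf[symmetric])
    ultimately show ?thesis by linarith
  qed
  have fe: "f j \<bullet> e = - supp_phi (D j) e" and phis1: "(\<Sum>j=1..r. supp_phi (D j) e) = 1"
    if "e \<in> s" "j \<in> {1..r}" for e j
  proof -
    have eN: "e \<in> N" using that su by auto
    have "(\<Sum>j=1..r. f j \<bullet> e + supp_phi (D j) e) = m \<bullet> e + (\<Sum>j=1..r. supp_phi (D j) e)"
      using f by (simp add: sum.distrib inner_sum_left)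
    also have "\<dots> \<le> 0" using me[OF that(1)] phisum[OF eN] by simp
    finally have le: "(\<Sum>j=1..r. f j \<bullet> e + supp_phi (D j) e) \<le> 0" .
    have nn: "\<forall>j\<in>{1..r}. 0 \<le> f j \<bullet> e + supp_phi (D j) e"
    proof
      fix j assume j: "j \<in> {1..r}"
      have "f j \<in> D j" using f(1) j by blast
      from Iphi[OF j this, of e] show "0 \<le> f j \<bullet> e + supp_phi (D j) e" by simp
    qed
    then have "(\<Sum>j=1..r. f j \<bullet> e + supp_phi (D j) e) = 0" using le sum_nonneg[of "{1..r}"] by (meson antisym)
    then have z: "\<forall>j\<in>{1..r}. f j \<bullet> e + supp_phi (D j) e = 0"
      by (intro iffD1[OF sum_nonneg_eq_0_iff]) (use nn in auto)
    then show "f j \<bullet> e = - supp_phi (D j) e" using bspec[OF z that(2)] by simp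
    have "(\<Sum>j=1..r. supp_phi (D j) e) = (\<Sum>j=1..r. - (f j \<bullet> e))" using z by (intro sum.cong) force+
    also have "\<dots> = - (m \<bullet> e)" using f by (simp add: sum_negf inner_sum_left)
    finally show "(\<Sum>j=1..r. supp_phi (D j) e) = 1" using me[OF that(1)] by simp
  qed
  define sj where "sj j = (\<Sum>e\<in>s. u e * supp_phi (D j) e)" for j
  have fv: "f j \<bullet> v = - sj j" if "j \<in> {1..r}" for j
  proof -
    have "f j \<bullet> v = (\<Sum>e\<in>s. u e * (f j \<bullet> e))" using su(5) by (auto simp: inner_sum_right)
    also have "\<dots> = (\<Sum>e\<in>s. - (u e * supp_phi (D j) e))" using fe that by (intro sum.cong) auto
    finally show ?thesis by (simp add: sj_def sum_negf)
  qed
  have sj0: "sj j \<ge> 0" if "j \<in> {1..r}" for j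
    unfolding sj_def
  proof (rule sum_nonneg)
    fix e assume e: "e \<in> s"
    have "supp_phi (D j) e \<in> {0,1}" using nef that su(2) e by blast
    then have "supp_phi (D j) e \<ge> 0" by auto
    moreover have "u e > 0" using su(3) e by blast
    ultimately show "0 \<le> u e * supp_phi (D j) e" by simp
  qed
  have sjsum: "(\<Sum>j=1..r. sj j) = 1"
  proof -
    have "(\<Sum>j=1..r. sj j) = (\<Sum>e\<in>s. \<Sum>j=1..r. u e * supp_phi (D j) e)"
      unfolding sj_def by (rule sum.swap)
    also have "\<dots> = (\<Sum>e\<in>s. u e * (\<Sum>j=1..r. supp_phi (D j) e))" by (simp add: sum_distrib_left)
    also have "\<dots> = (\<Sum>e\<in>s. u e)"
    proof (rule sum.cong)
      fix e assume es: "e \<in> s"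
      have one: "(1::nat) \<in> {1..r}" using assms(1) by (auto simp: nef_partition_def)
      show "u e * (\<Sum>j=1..r. supp_phi (D j) e) = u e" using phis1[OF es one] by simp
    qed simp
    finally show ?thesis using su by simp
  qed
  have "\<forall>j\<in>{1..r}. \<exists>g. g \<in> S j \<and> (\<forall>y\<in>D j. g \<bullet> v \<le> y \<bullet> v)"
  proof
    fix j assume j: "j \<in> {1..r}"
    from P[OF j, of v] obtain g where "g \<in> S j" "\<forall>y\<in>D j. g \<bullet> v \<le> y \<bullet> v" by blast
    then show "\<exists>g. g \<in> S j \<and> (\<forall>y\<in>D j. g \<bullet> v \<le> y \<bullet> v)" by blast
  qed
  from bchoice[OF this] obtain g where g: "\<forall>j\<in>{1..r}. g j \<in> S j \<and> (\<forall>y\<in>D j. g j \<bullet> v \<le> y \<bullet> v)"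
    by blast
  have gD: "\<forall>j\<in>{1..r}. g j \<in> D j"
  proof
    fix j assume j: "j \<in> {1..r}"
    have "g j \<in> S j" using g j by blast
    then show "g j \<in> D j" using S[OF j] by (simp add: hull_inc)
  qed
  have gv: "g j \<bullet> v = - sj j" if "j \<in> {1..r}" for j
  proof -
    have "(\<Sum>j=1..r. g j) \<bullet> v \<ge> -1" using HullGe[OF SumD[OF gD] vDs] .
    then have s1: "(\<Sum>j=1..r. g j \<bullet> v) \<ge> -1" by (simp add: inner_sum_left)
    have s2: "(\<Sum>j=1..r. f j \<bullet> v) = -1" using f mv by (simp add: inner_sum_left)
    have nn: "\<forall>j\<in>{1..r}. 0 \<le> f j \<bullet> v - g j \<bullet> v"
    proof
      fix j assume j: "j \<in> {1..r}"
      have "f j \<in> D j" using f(1) j by blast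
      moreover have "\<forall>y\<in>D j. g j \<bullet> v \<le> y \<bullet> v" using g j by blast
      ultimately show "0 \<le> f j \<bullet> v - g j \<bullet> v" by simp
    qed
    have "(\<Sum>j=1..r. f j \<bullet> v - g j \<bullet> v) \<le> 0" using s1 s2 by (simp add: sum_subtractf)
    then have "(\<Sum>j=1..r. f j \<bullet> v - g j \<bullet> v) = 0" using nn sum_nonneg[of "{1..r}"] by (meson antisym)
    then have zz: "\<forall>j\<in>{1..r}. f j \<bullet> v - g j \<bullet> v = 0"
      by (intro iffD1[OF sum_nonneg_eq_0_iff]) (use nn in auto)
    show ?thesis using bspec[OF zz that] fv[OF that] by simp
  qed
  obtain j0 where j0: "j0 \<in> {1..r}" "sj j0 > 0"
  proof (rule ccontr)
    assume "\<not> thesis"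
    have "\<forall>j\<in>{1..r}. sj j = 0"
    proof
      fix j assume j: "j \<in> {1..r}"
      show "sj j = 0"
      proof (rule ccontr)
        assume "sj j \<noteq> 0"
        then have "sj j > 0" using sj0[OF j] by simp
        then show False using that[OF j] \<open>\<not> thesis\<close> by blast
      qed
    qed
    then show False using sjsum by simp
  qed
  have "sj j0 \<le> (\<Sum>j=1..r. sj j)" by (rule member_le_sum) (use j0 sj0 in auto)
  then have sj1: "sj j0 \<le> 1" using sjsum by simp
  have "g j0 \<in> S j0" using g j0(1) by blast
  moreover have "\<forall>x\<in>S j0. lattice_point x" using S[OF j0(1)] by blast
  ultimately have "lattice_point (g j0)" by blast
  then have "g j0 \<bullet> v \<in> \<int>" using lattice_inner_int assms(2) by blast
  then have "sj j0 \<in> \<int>" using gv[OF j0(1)] by (metis Ints_minus minus_minus)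
  then obtain k :: int where k: "sj j0 = of_int k" by (auto elim: Ints_cases)
  have "k = 1" using k j0 sj1 by simp
  then have gv1: "g j0 \<bullet> v = -1" using gv[OF j0(1)] k by simp
  define gg where "gg = g j0"
  have ggD: "gg \<in> D j0" unfolding gg_def using gD j0(1) by blast
  have gge: "gg \<bullet> e \<ge> -1" if "e \<in> N" for e
  proof -
    have "supp_phi (D j0) e \<in> {0,1}" using nef j0(1) that by blast
    then show ?thesis using Iphi[OF j0(1) ggD, of e] by auto
  qed
  have Dsge: "Ds \<subseteq> {y. gg \<bullet> y \<ge> -1}"
    unfolding Ds by (rule hull_minimal) (use gge in \<open>auto simp: convex_halfspace_ge\<close>)
  define F where "F = Ds \<inter> {y. gg \<bullet> y = -1}"
  have Fface: "F face_of Ds" unfolding F_def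
    by (rule face_of_Int_supporting_hyperplane_ge) (use cvxDs Dsge in auto)
  have "v \<in> F" using vDs gv1 by (simp add: F_def gg_def)
  then have GF: "\<Gamma> \<subseteq> F" using a6 Fface by blast
  define Nab where "Nab = dual_nef \<Delta> D j0"
  have FN: "F \<subseteq> Nab"
  proof
    fix y assume yF: "y \<in> F"
    have ygg: "gg \<bullet> y = -1" using yF unfolding F_def by blast
    have "y \<in> Ds" using yF unfolding F_def by blast
    then have yN: "y \<in> convex hull N" using Ds by simp
    obtain s' u' where su': "finite s'" "s' \<subseteq> N" "\<forall>e\<in>s'. 0 < u' e" "sum u' s' = 1" "(\<Sum>e\<in>s'. u' e *\<^sub>R e) = y"
      using pos_weights[OF yN] by blast
    have s'sub: "s' \<subseteq> insert 0 {e\<in>N. supp_phi (D j0) e = 1}"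
    proof
      fix e assume es: "e \<in> s'"
      have "gg \<bullet> e = -1"
        by (rule weights_tight[of s' u' "-1" gg]) (use su' es gge ygg in auto)
      moreover have "gg \<bullet> e \<ge> - supp_phi (D j0) e" using Iphi[OF j0(1) ggD] .
      moreover have eN: "e \<in> N" using es su'(2) by blast
      moreover have "supp_phi (D j0) e \<in> {0,1}" using nef j0(1) eN by blast
      ultimately show "e \<in> insert 0 {e\<in>N. supp_phi (D j0) e = 1}" using es su' by auto
    qed
    have "(\<Sum>e\<in>s'. u' e *\<^sub>R e) \<in> convex hull (insert 0 {e\<in>N. supp_phi (D j0) e = 1})"
      by (rule in_hull_weights) (use su' s'sub in auto)
    then show "y \<in> Nab" unfolding Nab_def dual_nef_def N_def[symmetric] using su'(5) by simp
  qed
  have NabDs: "Nab \<subseteq> Ds"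
    unfolding Nab_def dual_nef_def N_def[symmetric]
    by (rule hull_minimal) (use zeroDs NDs cvxDs in auto)
  have GN: "\<Gamma> \<subseteq> Nab" using GF FN by (rule subset_trans)
  have "\<Gamma> face_of Nab" by (rule face_of_subset[OF a4 GN NabDs])
  then have "\<Gamma> face_of dual_nef \<Delta> D j0" by (simp add: Nab_def)
  with j0(1) show ?thesis by blast
qed

end
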